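(* For each integer $d\ge1$, with $[d]=\{1,\dots,d\}$, we have $|\mathcal Q_{[d]}|=\prod_{j=1}^d j!$.
   Context: For a finite set $J$ of non-negative integers, $\mathcal Q_J$ is the set of polynomials $\sum_{j\in J}t_jx^j$ with all $t_j\in(-1/2,1/2]$ such that $\sum_{j\in J}t_jm^j\in\mathbb Z$ for all $m\in\mathbb Z$. *)

theory Defs
  imports "HOL-Computational_Algebra.Polynomial"
begin

definition Q :: "nat set \<Rightarrow> real poly set" where
  "Q J = {p. (\<forall>i. i \<notin> J \<longrightarrow> coeff p i = 0)
            \<and> (\<forall>j\<in>J. coeff p j \<in> {-1/2<..1/2})
            \<and> (\<forall>m::int. poly p (of_int m) \<in> \<int>)}"

end

theory Submission imports Defs begin

definition IV :: "real poly \<Rightarrow> bool" where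
  "IV p \<longleftrightarrow> (\<forall>m::int. poly p (of_int m) \<in> \<int>)"

lemma IV_add: "IV p \<Longrightarrow> IV q \<Longrightarrow> IV (p + q)"
  by (simp add: IV_def)
lemma IV_diff: "IV p \<Longrightarrow> IV q \<Longrightarrow> IV (p - q)"
  by (simp add: IV_def)
lemma IV_smult: "IV p \<Longrightarrow> c \<in> \<int> \<Longrightarrow> IV (smult c p)"
  by (simp add: IV_def)

lemma IV_intcoeff: assumes "\<forall>i. coeff k i \<in> \<int>" shows "IV k"
  unfolding IV_def poly_altdef using assms by (auto intro!: Ints_sum Ints_mult Ints_power)

definition Dl :: "real poly \<Rightarrow> real poly" where
  "Dl p = pcompose p [:1,1:] - p"

lemma IV_Dl: "IV p \<Longrightarrow> IV (Dl p)"
  unfolding IV_def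
proof (intro allI)
  fix m :: int assume h: "\<forall>m::int. poly p (of_int m) \<in> \<int>"
  have "poly (Dl p) (of_int m) = poly p (of_int (m+1)) - poly p (of_int m)"
    by (simp add: Dl_def poly_pcompose add.commute)
  thus "poly (Dl p) (of_int m) \<in> \<int>" using h[rule_format, of "m+1"] h[rule_format, of m] by simp
qed

lemma d11[simp]: "degree [:1::real,1:] = 1" by simp

lemma dpc: "degree (pcompose p [:1::real,1:]) = degree p"
proof -
  have "degree (pcompose p [:1::real,1:]) = degree p * degree [:1::real,1:]" by (rule degree_pcompose)
  also have "\<dots> = degree p" by (simp only: d11 mult_1_right)
  finally show ?thesis .
qed

lemma shift_coeff: fixes p :: "real poly" assumes "degree p \<le> n" shows "coeff (pcompose p [:1,1:]) n = coeff p n"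
proof (cases "degree p = n")
  case True
  have "degree (pcompose p [:1,1:]) = n" using True by (simp only: dpc)
  moreover have "lead_coeff (pcompose p [:1,1:]) = lead_coeff p"
    by (subst lead_coeff_comp) auto
  ultimately show ?thesis using True by simp
next
  case False
  hence "degree p < n" using assms by simp
  moreover have "degree (pcompose p [:1,1:]) = degree p" by (simp only: dpc)
  ultimately show ?thesis by (simp add: coeff_eq_0)
qed

lemma Dl_pCons: "Dl (pCons a p) = pcompose p [:1,1:] + pCons 0 (Dl p)"
proof -
  have "poly (Dl (pCons a p)) = poly (pcompose p [:1,1:] + pCons 0 (Dl p))"
    by (rule ext) (simp add: Dl_def poly_pcompose algebra_simps)
  thus ?thesis using poly_eq_poly_eq_iff by blast
qed

lemma Dl_coeff: "degree p \<le> Suc n \<Longrightarrow> coeff (Dl p) n = of_nat (Suc n) * coeff p (Suc n) \<and> degree (Dl p) \<le> n"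
proof (induction n arbitrary: p)
  case 0
  obtain a p' where p: "p = pCons a p'" by (cases p) auto
  have "degree p' \<le> 0"
  proof (rule degree_le, intro allI impI)
    fix i :: nat assume "0 < i"
    hence "degree p < Suc i" using 0 by simp
    thus "coeff p' i = 0" using coeff_eq_0[of p "Suc i"] p by simp
  qed
  hence dp': "degree p' = 0" by simp
  then obtain c where c: "p' = [:c:]" by (metis degree_eq_zeroE)
  have "Dl p = [:c:]" unfolding p Dl_pCons c by (simp add: Dl_def)
  then show ?case using p c by simp
next
  case (Suc n)
  obtain a p' where p: "p = pCons a p'" by (cases p) auto
  have dp': "degree p' \<le> Suc n"
  proof (rule degree_le, intro allI impI)
    fix i :: nat assume "Suc n < i"
    hence "degree p < Suc i" using Suc.prems by simp
    thus "coeff p' i = 0" using coeff_eq_0[of p "Suc i"] p by simp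
  qed
  note IH = Suc.IH[OF dp']
  have c1: "coeff (pcompose p' [:1,1:]) (Suc n) = coeff p' (Suc n)" using shift_coeff dp' by blast
  have d1: "degree (pcompose p' [:1,1:]) \<le> Suc n" using dp' by (simp only: dpc)
  have d2: "degree (pCons 0 (Dl p')) \<le> Suc n" using IH
    by (intro order.trans[OF degree_pCons_le]) simp
  have "coeff (Dl p) (Suc n) = coeff p' (Suc n) + of_nat (Suc n) * coeff p' (Suc n)"
    unfolding p Dl_pCons coeff_add coeff_pCons_Suc c1 using IH by simp
  also have "\<dots> = of_nat (Suc (Suc n)) * coeff p (Suc (Suc n))"
    unfolding p coeff_pCons_Suc by (simp only: of_nat_Suc) (simp add: algebra_simps)
  finally have cc: "coeff (Dl p) (Suc n) = of_nat (Suc (Suc n)) * coeff p (Suc (Suc n))" .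
  have "degree (Dl p) \<le> Suc n" unfolding p Dl_pCons by (rule degree_add_le[OF d1 d2])
  with cc show ?case by blast
qed

lemma key: "degree p \<le> n \<Longrightarrow> IV p \<Longrightarrow> fact n * coeff p n \<in> \<int>"
proof (induction n arbitrary: p)
  case 0
  then show ?case by (simp add: IV_def) (metis of_int_0 poly_0_coeff_0)
next
  case (Suc n)
  have "fact n * coeff (Dl p) n \<in> \<int>" using Suc Dl_coeff IV_Dl by blast
  then show ?case using Dl_coeff[OF Suc.prems(1)] by (simp add: algebra_simps)
qed


definition rnd :: "real \<Rightarrow> int" where "rnd c = \<lceil>c - 1/2\<rceil>"
definition fr :: "real \<Rightarrow> real" where "fr c = c - of_int (rnd c)"

lemma fr_box: "fr c \<in> {-1/2<..1/2}"
proof -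
  have "of_int (rnd c) - 1 < c - 1/2" "c - 1/2 \<le> of_int (rnd c)"
    unfolding rnd_def by linarith+
  thus ?thesis unfolding fr_def by auto
qed

lemma fr_id: "c \<in> {-1/2<..1/2} \<Longrightarrow> fr c = c"
proof -
  assume "c \<in> {-1/2<..1/2}"
  hence "rnd c = 0" unfolding rnd_def by (intro ceiling_unique) auto
  thus ?thesis by (simp add: fr_def)
qed

lemma fr_0[simp]: "fr 0 = 0" by (rule fr_id) auto

lemma fr_add_int: "z \<in> \<int> \<Longrightarrow> fr (c + z) = fr c"
proof -
  assume "z \<in> \<int>"
  then obtain m where m: "z = of_int m" by (auto elim: Ints_cases)
  have "rnd (c + z) = rnd c + m" unfolding rnd_def m
    by (metis add_diff_eq ceiling_add_of_int diff_add_eq)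
  thus ?thesis unfolding fr_def m by simp
qed

definition Kp :: "real poly \<Rightarrow> real poly" where
  "Kp p = (\<Sum>i\<le>degree p. monom (of_int (rnd (coeff p i))) i)"
definition R :: "real poly \<Rightarrow> real poly" where "R p = p - Kp p"

lemma coeff_Kp: "coeff (Kp p) i = (if i \<le> degree p then of_int (rnd (coeff p i)) else 0)"
  unfolding Kp_def by (simp add: coeff_sum coeff_monom)

lemma Kp_int: "\<forall>i. coeff (Kp p) i \<in> \<int>"
  by (simp add: coeff_Kp)

lemma coeff_R: "coeff (R p) i = fr (coeff p i)"
proof (cases "i \<le> degree p")
  case True thus ?thesis by (simp add: R_def coeff_Kp fr_def)
next
  case False thus ?thesis by (simp add: R_def coeff_Kp coeff_eq_0)
qed

lemma IV_R: "IV p \<Longrightarrow> IV (R p)"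
  unfolding R_def using IV_diff IV_intcoeff Kp_int by blast

lemma R_add_int: "\<forall>i. coeff k i \<in> \<int> \<Longrightarrow> R (p + k) = R p"
  by (rule poly_eqI) (simp add: coeff_R fr_add_int)

lemma R_id: "\<forall>i. coeff p i \<in> {-1/2<..1/2} \<Longrightarrow> R p = p"
  by (rule poly_eqI) (simp add: coeff_R fr_id)

lemma R_R: "R (R p) = R p"
  by (rule poly_eqI) (simp add: coeff_R fr_id[OF fr_box])

lemma R_eq: "R p = p + (- Kp p)" "\<forall>i. coeff (- Kp p) i \<in> \<int>"
  by (simp_all add: R_def Kp_int)

definition bp :: "nat \<Rightarrow> real poly" where
  "bp n = smult (1 / fact n) (\<Prod>i<n. [:- of_nat i, 1:])"

lemma poly_bp: "poly (bp n) x = x gchoose n"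
  by (simp add: bp_def poly_prod gbinomial_prod_rev atLeast0LessThan)

lemma gchoose_int: "(of_int m :: real) gchoose n \<in> \<int>"
proof (cases "m \<ge> 0")
  case True
  hence "(of_int m :: real) = of_nat (nat m)" by simp
  thus ?thesis by (metis Ints_of_nat binomial_gbinomial)
next
  case False
  have "(of_int m :: real) gchoose n = (-1)^n * ((of_nat n - of_int m - 1) gchoose n)"
    by (rule gbinomial_negated_upper)
  moreover have "(of_nat n - of_int m - 1 :: real) = of_nat (nat (int n - m - 1))"
    using False by simp
  ultimately show ?thesis by (metis Ints_mult Ints_of_nat Ints_power Ints_minus Ints_1 binomial_gbinomial)
qed

lemma IV_bp: "IV (bp n)"
  unfolding IV_def poly_bp using gchoose_int by blast

lemma bp_0: "n \<ge> 1 \<Longrightarrow> coeff (bp n) 0 = 0"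
proof -
  assume "n \<ge> 1"
  hence "0 \<in> {..<n}" by auto
  hence "(\<Prod>i<n. poly [:- of_nat i, 1:] (0::real)) = 0"
    by (intro prod_zero) auto
  thus ?thesis by (simp add: poly_0_coeff_0[symmetric] bp_def poly_prod)
qed

lemma bp_deg: "degree (bp n) = n" and bp_lead: "coeff (bp n) n = 1 / fact n"
proof -
  have nz: "\<forall>i\<in>{..<n}. [:- of_nat i, 1::real:] \<noteq> 0" by simp
  have d: "degree (\<Prod>i<n. [:- of_nat i, 1::real:]) = n"
    using degree_prod_eq_sum_degree[OF nz] by simp
  have l: "lead_coeff (\<Prod>i<n. [:- of_nat i, 1::real:]) = 1"
    by (simp add: lead_coeff_prod)
  show "degree (bp n) = n" using d by (simp add: bp_def)
  show "coeff (bp n) n = 1 / fact n" using d l by (simp add: bp_def)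
qed


lemma Q_iff: "p \<in> Q J \<longleftrightarrow> (\<forall>i. i \<notin> J \<longrightarrow> coeff p i = 0) \<and> (\<forall>i. coeff p i \<in> {-1/2<..1/2}) \<and> IV p"
proof -
  have "(\<forall>i. i \<notin> J \<longrightarrow> coeff p i = 0) \<Longrightarrow> (\<forall>j\<in>J. coeff p j \<in> {-1/2<..1/2}) \<longleftrightarrow> (\<forall>i. coeff p i \<in> {-1/2<..(1/2::real)})"
    apply (rule iffI)
     apply (intro allI, case_tac "i \<in> J")
      apply auto
    done
  thus ?thesis unfolding Q_def IV_def by blast
qed

definition Aset :: "int \<Rightarrow> int set" where "Aset N = {a. - N < 2*a \<and> 2*a \<le> N}"

lemma Aset_l1: "(-N < 2*a \<and> 2*a \<le> N) \<longleftrightarrow> (-((N-1) div 2) \<le> a \<and> a \<le> N div 2)" for N a :: int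
  by presburger
lemma Aset_l2: "N div 2 - (-((N-1) div 2)) + 1 = N" for N :: int
  by presburger

lemma card_Aset: assumes "N \<ge> 1" shows "card (Aset N) = nat N"
proof -
  have "Aset N = {- ((N - 1) div 2) .. N div 2}" unfolding Aset_def
    by (rule set_eqI) (simp only: mem_Collect_eq atLeastAtMost_iff Aset_l1)
  thus ?thesis by (simp only: card_atLeastAtMost_int Aset_l2)
qed

definition Psi :: "nat \<Rightarrow> real poly \<times> int \<Rightarrow> real poly" where
  "Psi n x = R (fst x + smult (of_int (snd x)) (bp n))"

lemma box_a: assumes "a \<in> Aset (fact n)" shows "of_int a / fact n \<in> {-1/2<..(1/2::real)}"
proof -
  have F: "(fact n :: real) > 0" by simp
  have i: "- fact n < 2*a" "2*a \<le> fact n" using assms by (simp_all add: Aset_def)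
  have "real_of_int (- fact n) < real_of_int (2*a)" using i(1) by (simp only: of_int_less_iff)
  moreover have "real_of_int (2*a) \<le> real_of_int (fact n)" using i(2) by (simp only: of_int_le_iff)
  ultimately have "- (fact n) < 2 * real_of_int a" "2 * real_of_int a \<le> fact n"
    by (simp_all add: of_int_fact)
  thus ?thesis using F by (auto simp: field_simps)
qed

lemma coeff_Psi: "coeff (Psi n (q,a)) i = fr (coeff q i + of_int a * coeff (bp n) i)"
  by (simp add: Psi_def coeff_R)

lemma step: "card (Q {1..Suc d}) = card (Q {1..d}) * fact (Suc d)"
proof -
  define n where "n = Suc d"
  define A where "A = Aset (fact n)"
  have n1: "n \<ge> 1" by (simp add: n_def)
  have Fpos: "(fact n :: real) > 0" by simp
  have inQ: "Psi n x \<in> Q {1..n}" if x: "x \<in> Q {1..d} \<times> A" for x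
  proof -
    obtain q a where qa: "x = (q,a)" by (cases x)
    have q: "q \<in> Q {1..d}" and a: "a \<in> A" using x qa by auto
    have qc: "\<forall>i. i \<notin> {1..d} \<longrightarrow> coeff q i = 0" "IV q" using q Q_iff by blast+
    have "IV (Psi n x)" unfolding Psi_def qa
      using qc(2) by (intro IV_R IV_add IV_smult IV_bp) auto
    moreover have "coeff (Psi n x) i = 0" if "i \<notin> {1..n}" for i
    proof (cases "i = 0")
      case True thus ?thesis using qc bp_0[OF n1] by (simp add: qa coeff_Psi)
    next
      case False
      hence "i > n" using that by auto
      hence "coeff (bp n) i = 0" "coeff q i = 0" using qc bp_deg[of n] n_def by (auto intro: coeff_eq_0)
      thus ?thesis by (simp add: qa coeff_Psi)
    qed
    moreover have "\<forall>i. coeff (Psi n x) i \<in> {-1/2<..1/2}" unfolding Psi_def coeff_R using fr_box by blast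
    ultimately show ?thesis unfolding Q_iff by blast
  qed
  have inj: "inj_on (Psi n) (Q {1..d} \<times> A)"
  proof (rule inj_onI)
    fix x y assume x: "x \<in> Q {1..d} \<times> A" and y: "y \<in> Q {1..d} \<times> A" and e: "Psi n x = Psi n y"
    obtain q a where qa: "x = (q,a)" by (cases x)
    obtain q' a' where qa': "y = (q',a')" by (cases y)
    have q: "q \<in> Q {1..d}" "a \<in> A" "q' \<in> Q {1..d}" "a' \<in> A" using x y qa qa' by auto
    have "coeff q n = 0" "coeff q' n = 0" using q Q_iff n_def by auto
    hence cn: "coeff (Psi n x) n = of_int a / fact n" "coeff (Psi n y) n = of_int a' / fact n"
      using box_a q unfolding A_def qa qa' coeff_Psi bp_lead by (simp_all add: fr_id)
    hence "a = a'" using e Fpos by simp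
    define s where "s = smult (of_int a) (bp n)"
    have e2: "R (q + s) = R (q' + s)" using e unfolding qa qa' Psi_def s_def \<open>a = a'\<close> by simp
    have "q + s + - Kp (q + s) = q' + s + - Kp (q' + s)" using e2 R_eq by metis
    hence "q = q' + (Kp (q + s) - Kp (q' + s))" by (simp add: algebra_simps)
    hence "R q = R q'" by (metis R_add_int Kp_int coeff_diff Ints_diff)
    moreover have "R q = q" "R q' = q'" using q Q_iff R_id by blast+
    ultimately show "x = y" using qa qa' \<open>a = a'\<close> by simp
  qed
  have img: "Psi n ` (Q {1..d} \<times> A) = Q {1..n}"
  proof
    show "Psi n ` (Q {1..d} \<times> A) \<subseteq> Q {1..n}" using inQ by blast
  next
    show "Q {1..n} \<subseteq> Psi n ` (Q {1..d} \<times> A)"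
    proof
      fix p assume p: "p \<in> Q {1..n}"
      have pc: "\<forall>i. i \<notin> {1..n} \<longrightarrow> coeff p i = 0" "\<forall>i. coeff p i \<in> {-1/2<..1/2}" "IV p"
        using p Q_iff by blast+
      have dp: "degree p \<le> n" using pc(1) by (intro degree_le) auto
      have "fact n * coeff p n \<in> \<int>" using key[OF dp pc(3)] .
      then obtain a where a: "fact n * coeff p n = of_int a" by (auto elim: Ints_cases)
      have cpn: "coeff p n = of_int a / fact n" using a Fpos by (simp add: field_simps)
      have aA: "a \<in> A" unfolding A_def Aset_def
      proof -
        have "-1/2 < coeff p n" "coeff p n \<le> 1/2" using pc(2) by auto
        hence "- fact n < 2 * real_of_int a" "2 * real_of_int a \<le> fact n"
          using cpn Fpos by (auto simp: field_simps)
        hence "real_of_int (- fact n) < real_of_int (2*a)" "real_of_int (2*a) \<le> real_of_int (fact n)"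
          by (simp_all add: of_int_fact)
        hence "- fact n < 2 * a" "2 * a \<le> fact n"
          by (simp_all only: of_int_less_iff of_int_le_iff)
        thus "a \<in> {a. - fact n < 2 * a \<and> 2 * a \<le> fact n}" by simp
      qed
      define s where "s = smult (of_int a) (bp n)"
      define q where "q = R (p - s)"
      have qQ: "q \<in> Q {1..d}" unfolding Q_iff
      proof (intro conjI allI impI)
        show "IV q" unfolding q_def s_def by (intro IV_R IV_diff IV_smult IV_bp pc) auto
        show "coeff q i \<in> {-1/2<..1/2}" for i unfolding q_def coeff_R by (rule fr_box)
        fix i assume i: "i \<notin> {1..d}"
        show "coeff q i = 0"
        proof -
          consider "i = 0" | "i = n" | "i > n" using i n_def by fastforce
          thus ?thesis
          proof cases
            case 1 thus ?thesis using pc(1) bp_0[OF n1] by (simp add: q_def s_def coeff_R)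
          next
            case 2 thus ?thesis using cpn bp_lead by (simp add: q_def s_def coeff_R)
          next
            case 3
            hence "coeff (bp n) i = 0" "coeff p i = 0" using pc(1) bp_deg[of n] by (auto intro: coeff_eq_0)
            thus ?thesis by (simp add: q_def s_def coeff_R)
          qed
        qed
      qed
      have "Psi n (q, a) = R (R (p - s) + s)" by (simp add: Psi_def q_def s_def)
      also have "\<dots> = R (p + - Kp (p - s))" by (simp add: R_def algebra_simps)
      also have "\<dots> = R p" using R_add_int R_eq(2) by blast
      also have "\<dots> = p" using R_id pc(2) by blast
      finally show "p \<in> Psi n ` (Q {1..d} \<times> A)" using qQ aA by force
    qed
  qed
  have "card (Q {1..n}) = card (Q {1..d} \<times> A)" using card_image[OF inj] img by simp
  also have "\<dots> = card (Q {1..d}) * card A" by (simp add: card_cartesian_product)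
  also have "card A = fact n" unfolding A_def
    by (subst card_Aset) (simp_all add: fact_ge_1, metis nat_int of_nat_fact)
  finally show ?thesis by (simp add: n_def)
qed

lemma Q_empty: "Q {} = {0}"
proof -
  have "p \<in> Q {} \<longleftrightarrow> p = 0" for p
  proof
    assume "p \<in> Q {}" thus "p = 0" by (auto simp: Q_def poly_eq_iff)
  next
    assume "p = 0" thus "p \<in> Q {}" by (simp add: Q_def)
  qed
  thus ?thesis by auto
qed

theorem mainTheorem14:
  fixes d :: nat
  assumes "d \<ge> 1"
  shows "card (Q {1..d}) = (\<Prod>j=1..d. fact j)"
proof (induction d)
  case 0 thus ?case by (simp add: Q_empty)
next
  case (Suc d)
  have "prod fact {1..Suc d} = prod fact {1..d} * (fact (Suc d) :: nat)"
    by (simp add: prod.nat_ivl_Suc')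
  thus ?case using Suc.IH step[of d] by presburger
qed

end
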